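(* Let $n\ge6$ be even, $l$ an integer with $2\le l<n/2$, $m\in\mathbb N$, $B=B^{(1,n,l)}$, and assume the seeds are i.i.d. uniform on $[n]$. Then for every $i\in B\setminus\{l+1\}$, $$\mathsf P\bigl(\Xi_B(l+1)\le\Xi_B(i)\bigr)\le\exp\Bigl\{m\log\Bigl[1-\tfrac1n\bigl(\sqrt{l+1}-\sqrt2\bigr)^2\Bigr]\Bigr\}.$$
   Context: Candidates $[n]$, $m$ voters; voter $j$ has the clockwise oriented preference list $(s_j,s_j+1,\dots,n,1,\dots,s_j-1)$ with seed $s_j$; the seeds are independent and uniform on $[n]$. In an election among a non-empty $S\subseteq[n]$ each voter votes for the first candidate of $S$ in its list; $\Xi_S(i)$ is the number of votes for $i\in S$. For even $n$ and $2\le l<n/2$: $B^{(1,n,l)}=\{n-l+1,\dots,n\}\cup\{l+2i-1:1\le i\le (n-2l)/2\}$ (the complement of $A^{(1,n,l)}=\{1,\dots,l\}\cup\{l+2i:1\le i\le(n-2l)/2\}$). *)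

theory Defs
  imports Complex_Main "HOL-Library.FuncSet"
begin

definition pref_list :: "nat \<Rightarrow> nat \<Rightarrow> nat list" where
  "pref_list n s = [s..<n+1] @ [1..<s]"

definition vote :: "nat \<Rightarrow> nat set \<Rightarrow> nat \<Rightarrow> nat" where
  "vote n S s = hd (filter (\<lambda>c. c \<in> S) (pref_list n s))"

definition Xi :: "nat \<Rightarrow> nat \<Rightarrow> nat set \<Rightarrow> (nat \<Rightarrow> nat) \<Rightarrow> nat \<Rightarrow> nat" where
  "Xi n m S sd i = card {j \<in> {1..m}. vote n S (sd j) = i}"

text \<open>Probability of an event on seeds, the seeds being i.i.d. uniform on [n]
  (i.e. the seed vector is uniform on {1..m} \<rightarrow> {1..n}).\<close>
definition seed_prob :: "nat \<Rightarrow> nat \<Rightarrow> ((nat \<Rightarrow> nat) \<Rightarrow> bool) \<Rightarrow> real" where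
  "seed_prob n m P = real (card {sd \<in> {1..m} \<rightarrow>\<^sub>E {1..n}. P sd}) / real (n ^ m)"

definition B1 :: "nat \<Rightarrow> nat \<Rightarrow> nat set" where
  "B1 n l = {n - l + 1..n} \<union> {l + 2 * i - 1 | i. 1 \<le> i \<and> i \<le> (n - 2 * l) div 2}"

end

theory Submission imports Defs begin
lemma vote_least:
  assumes "s \<le> n" "n \<in> S"
  shows "vote n S s = (LEAST y. y \<in> S \<and> s \<le> y)"
proof -
  define c where "c = (LEAST y. y \<in> S \<and> s \<le> y)"
  have c1: "c \<in> S \<and> s \<le> c" unfolding c_def by (rule LeastI[of _ n]) (use assms in auto)
  have c2: "c \<le> n" unfolding c_def by (rule Least_le) (use assms in auto)
  have c3: "\<And>x. x < c \<Longrightarrow> \<not> (x \<in> S \<and> s \<le> x)" unfolding c_def by (rule not_less_Least)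
  have e0: "n + 1 = c + (n + 1 - c)" using c2 by simp
  have "[s..<n+1] = [s..<c] @ [c..<n+1]"
    using upt_add_eq_append[of s c "n + 1 - c"] c1 e0 by simp
  also have "[c..<n+1] = c # [Suc c..<n+1]" using c2 by (intro upt_conv_Cons) simp
  finally have "[s..<n+1] = [s..<c] @ c # [Suc c..<n+1]" .
  moreover have "filter (\<lambda>x. x \<in> S) [s..<c] = []"
    using c3 by (auto simp: filter_empty_conv)
  ultimately show ?thesis using c1 unfolding vote_def pref_list_def c_def[symmetric] by simp
qed

lemma prod_if_pow:
  assumes "finite J"
  shows "(\<Prod>j\<in>J. if Q j then (t::real) else 1) = t ^ card {j\<in>J. Q j}"
proof -
  have "(\<Prod>j\<in>J. if Q j then (t::real) else 1) = (\<Prod>j\<in>J \<inter> {j. Q j}. t) * (\<Prod>j\<in>J \<inter> - {j. Q j}. 1)"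
    by (rule prod.If_cases[OF assms])
  also have "J \<inter> {j. Q j} = {j\<in>J. Q j}" by auto
  finally show ?thesis by simp
qed

lemma sum_if_card:
  assumes "finite J"
  shows "(\<Sum>j\<in>J. if Q j then (c::real) else 0) = c * card {j\<in>J. Q j}"
  using sum.inter_filter[OF assms, of "\<lambda>_. c" Q, symmetric] by simp

lemma B_facts:
  assumes "even n" "2 \<le> l" "2 * l < n"
  shows "n \<in> B1 n l" "l + 1 \<in> B1 n l" "\<And>y. y \<in> B1 n l \<Longrightarrow> l + 1 \<le> y"
proof -
  show "n \<in> B1 n l" unfolding B1_def using assms by auto
  have "1 \<le> (n - 2 * l) div 2" using assms by presburger
  then show "l + 1 \<in> B1 n l" unfolding B1_def by (auto intro!: exI[of _ 1])
  show "\<And>y. y \<in> B1 n l \<Longrightarrow> l + 1 \<le> y" unfolding B1_def using assms by auto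
qed

lemma B_prev:
  assumes "even n" "2 \<le> l" "2 * l < n" "i \<in> B1 n l" "i \<noteq> l + 1"
  shows "\<exists>y\<in>B1 n l. i - 2 \<le> y \<and> y < i"
proof -
  consider "i \<in> {n - l + 1..n}" | k where "i = l + 2 * k - 1" "1 \<le> k" "k \<le> (n - 2 * l) div 2"
    using assms(4) unfolding B1_def by auto
  then show ?thesis
  proof cases
    case 1
    show ?thesis
    proof (cases "i = n - l + 1")
      case True
      define K where "K = (n - 2 * l) div 2"
      have "1 \<le> K" "l + 2 * K - 1 = n - l - 1" using assms unfolding K_def by presburger+
      then have "n - l - 1 \<in> B1 n l" unfolding B1_def K_def by (auto intro!: exI[of _ "(n - 2 * l) div 2"])
      then show ?thesis using True assms by (intro bexI[of _ "n - l - 1"]) auto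
    next
      case False
      then have "i - 1 \<in> B1 n l" using 1 unfolding B1_def by auto
      then show ?thesis using 1 False assms by (intro bexI[of _ "i - 1"]) auto
    qed
  next
    case 2
    then have "k \<ge> 2" using assms by auto
    then have "l + 2 * (k - 1) - 1 \<in> B1 n l" using 2 unfolding B1_def
      by (auto intro!: exI[of _ "k - 1"])
    then show ?thesis using 2 \<open>k \<ge> 2\<close> by (intro bexI[of _ "l + 2 * (k - 1) - 1"]) auto
  qed
qed


theorem mainTheorem4:
  fixes n l m i :: nat
  assumes "n \<ge> 6" and "even n" and "2 \<le> l" and "2 * l < n"
    and "i \<in> B1 n l" and "i \<noteq> l + 1"
  shows "seed_prob n m (\<lambda>sd. Xi n m (B1 n l) sd (l + 1) \<le> Xi n m (B1 n l) sd i)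
         \<le> exp (real m * ln (1 - (sqrt (real l + 1) - sqrt 2)^2 / real n))"
proof -
  define B where "B = B1 n l"
  define V where "V = (\<lambda>s. vote n B s)"
  define r where "r = sqrt (real l + 1)"
  define q where "q = sqrt (2::real)"
  define t where "t = r / q"
  define c where "c = (r - q)^2"
  have r2: "r^2 = real l + 1" unfolding r_def by simp
  have q2: "q^2 = 2" unfolding q_def by simp
  have qpos: "q > 0" unfolding q_def by simp
  have rq: "q \<le> r" unfolding r_def q_def using assms(3) by (simp add: real_sqrt_le_mono)
  have t1: "1 \<le> t" unfolding t_def using rq qpos by simp
  have tpos: "t > 0" using t1 by simp
  have Bf: "n \<in> B" "l + 1 \<in> B" "\<And>y. y \<in> B \<Longrightarrow> l + 1 \<le> y"
    using B_facts[OF assms(2,3,4)] unfolding B_def by auto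
  obtain y0 where y0: "y0 \<in> B" "i - 2 \<le> y0" "y0 < i"
    using B_prev[OF assms(2,3,4,5,6)] unfolding B_def by auto
  have Vl: "V s = l + 1" if "s \<in> {1..l+1}" for s
  proof -
    have "V s = (LEAST y. y \<in> B \<and> s \<le> y)" unfolding V_def
      by (rule vote_least) (use that assms Bf in auto)
    also have "\<dots> = l + 1"
      by (rule Least_equality) (use that Bf in auto)
    finally show ?thesis .
  qed
  have Vi: "s \<in> {i - 1, i}" if "s \<in> {1..n}" "V s = i" for s
  proof -
    have "i = (LEAST y. y \<in> B \<and> s \<le> y)" using that(2) unfolding V_def
      by (subst (asm) vote_least) (use that assms Bf in auto)
    then have a: "s \<le> i" and b: "\<And>y. y \<in> B \<Longrightarrow> s \<le> y \<Longrightarrow> i \<le> y"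
      using LeastI[of "\<lambda>y. y \<in> B \<and> s \<le> y" n] Least_le[of "\<lambda>y. y \<in> B \<and> s \<le> y"] Bf that
      by auto
    have "\<not> s \<le> i - 2" using b[of y0] y0 by auto
    then show ?thesis using a by auto
  qed
  define a where "a = card {s\<in>{1..n}. V s = l + 1}"
  define b where "b = card {s\<in>{1..n}. V s = i}"
  have a_ge: "l + 1 \<le> a"
  proof -
    have "{1..l+1} \<subseteq> {s\<in>{1..n}. V s = l + 1}" using Vl assms by auto
    from card_mono[OF _ this] show ?thesis unfolding a_def by simp
  qed
  have b_le: "b \<le> 2"
  proof -
    have "{s\<in>{1..n}. V s = i} \<subseteq> {i - 1, i}" using Vi by auto
    from card_mono[OF _ this] have "b \<le> card {i - 1, i}" unfolding b_def by simp
    also have "\<dots> \<le> 2" by (simp add: card_insert_if)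
    finally show ?thesis .
  qed
  define w where "w = (\<lambda>s. (if V s = i then t else 1) * (if V s = l + 1 then 1/t else 1))"
  have wpos: "w s > 0" for s unfolding w_def using tpos by auto
  have wsplit: "w s = 1 + (if V s = i then t - 1 else 0) + (if V s = l + 1 then 1/t - 1 else 0)" for s
    unfolding w_def using assms(6) by auto
  have sumw: "(\<Sum>s\<in>{1..n}. w s) = real n + (t - 1) * b + (1/t - 1) * a"
    unfolding wsplit sum.distrib a_def b_def
    by (simp add: sum_if_card[where c = "t - 1"] sum_if_card[where c = "1/t - 1"])
  have sumw_le: "(\<Sum>s\<in>{1..n}. w s) \<le> real n - c"
  proof -
    have "(t - 1) * b \<le> (t - 1) * 2" using t1 b_le by (intro mult_left_mono) auto
    moreover have "(1/t - 1) * a \<le> (1/t - 1) * (real l + 1)"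
      using t1 a_ge by (intro mult_left_mono_neg) auto
    moreover have "(t - 1) * 2 + (1/t - 1) * (real l + 1) = - c"
    proof -
      have e1: "q*(q*x) = 2*x" for x using q2 by (simp add: power2_eq_square mult.assoc[symmetric])
      have e2: "r*(r*x) = (1 + real l)*x" for x using r2 by (simp add: power2_eq_square mult.assoc[symmetric])
      show ?thesis unfolding c_def t_def using qpos rq q2[unfolded power2_eq_square]
        by (simp add: field_simps power2_eq_square e1 e2)
    qed
    ultimately show ?thesis unfolding sumw by linarith
  qed
  define P where "P = (\<lambda>sd. Xi n m B sd (l + 1) \<le> Xi n m B sd i)"
  define PE where "PE = {1..m} \<rightarrow>\<^sub>E {1..n}"
  have finPE: "finite PE" unfolding PE_def by (simp add: finite_PiE)
  have key: "(if P sd then 1 else 0) \<le> (\<Prod>j\<in>{1..m}. w (sd j))" for sd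
  proof -
    have "(\<Prod>j\<in>{1..m}. w (sd j)) = (\<Prod>j\<in>{1..m}. if V (sd j) = i then t else 1) *
        (\<Prod>j\<in>{1..m}. if V (sd j) = l + 1 then 1/t else 1)"
      unfolding w_def by (rule prod.distrib)
    also have "\<dots> = t ^ Xi n m B sd i * (1/t) ^ Xi n m B sd (l+1)"
      unfolding Xi_def V_def by (simp add: prod_if_pow)
    finally have eq: "(\<Prod>j\<in>{1..m}. w (sd j)) = t ^ Xi n m B sd i / t ^ Xi n m B sd (l+1)"
      by (simp add: power_one_over)
    show ?thesis
    proof (cases "P sd")
      case True
      then have "t ^ Xi n m B sd (l+1) \<le> t ^ Xi n m B sd i"
        unfolding P_def using t1 by (intro power_increasing) auto
      then show ?thesis using True eq tpos by simp
    next
      case False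
      then show ?thesis using wpos by (simp add: prod_nonneg less_imp_le)
    qed
  qed
  have "real (card {sd \<in> PE. P sd}) = (\<Sum>sd\<in>PE. if P sd then 1 else 0)"
    using sum_if_card[OF finPE, of P 1] by simp
  also have "\<dots> \<le> (\<Sum>sd\<in>PE. \<Prod>j\<in>{1..m}. w (sd j))"
    by (rule sum_mono) (rule key)
  also have "\<dots> = (\<Prod>j\<in>{1..m}. \<Sum>s\<in>{1..n}. w s)"
    unfolding PE_def by (rule prod_sum_PiE[symmetric]) auto
  also have "\<dots> = (\<Sum>s\<in>{1..n}. w s) ^ m" by simp
  also have "\<dots> \<le> (real n - c) ^ m"
    by (rule power_mono[OF sumw_le]) (simp add: sum_nonneg less_imp_le wpos)
  finally have cardle: "real (card {sd \<in> PE. P sd}) \<le> (real n - c) ^ m" .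
  have npos: "real n > 0" using assms by simp
  have clt: "c < real n"
  proof -
    have "r - q < r" using qpos by simp
    then have "c < r^2" unfolding c_def using rq by (intro power_strict_mono) auto
    then show ?thesis using r2 assms by simp
  qed
  have "seed_prob n m (\<lambda>sd. Xi n m (B1 n l) sd (l + 1) \<le> Xi n m (B1 n l) sd i)
      = real (card {sd \<in> PE. P sd}) / real n ^ m"
    unfolding seed_prob_def PE_def P_def B_def by simp
  also have "\<dots> \<le> (real n - c) ^ m / real n ^ m"
    using cardle npos by (intro divide_right_mono) auto
  also have "\<dots> = (1 - c / real n) ^ m"
    using npos by (simp add: power_divide[symmetric] diff_divide_distrib)
  also have "\<dots> = exp (real m * ln (1 - c / real n))"
    using clt npos by (simp add: exp_of_nat_mult)
  finally show ?thesis unfolding c_def r_def q_def .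
qed

end
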